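(* In any execution of Algorithm FS (with $T\ge 4$), let $v,w$ be active neighboring nodes in round $t$ with $d_t(v,w)\le 1$, and let $t'>t$ be the first round with $d_{t'}(v,w)>1$. Then $d_{t'+1}(v,w)\le 1$.
   Context: Model (beeping model with arbitrary activations). $G=(V,E)$ finite connected undirected graph; synchronous rounds; in each round each active node either beeps or listens; a listening node learns only whether at least one neighbor beeped. $T\ge 4$; checkpoints $\mathit{CP}=\{c\in\mathbb{N}_0: c\equiv 0\pmod 4,\ T-c>3\}$. Algorithm FS. Each node $v$ stores $\delta(v)\in\{0,\dots,T-1\}$, $\mathit{State}(v)\in\{\mathit{Inactive},\mathit{Beep},\mathit{Listen}\}$, $\mathit{Induced}(v)\in\{\mathit{true},\mathit{false}\}$. Initially all nodes are Inactive. A node $v$ is activated in round $t$ if the adversary activates it in round $t$, or $v$ is inactive and some neighbor beeps in round $t-1$; then at the beginning of round $t$, $\delta(v)=1$, $\mathit{State}(v)=\mathit{Beep}$, $\mathit{Induced}(v)=\mathit{true}$. In each round each active node $v$, according to its state at the beginning of the round: (1) if $\mathit{State}(v)=\mathit{Beep}$: beeps; $\delta(v)\gets\delta(v)+1\bmod T$; $\mathit{State}(v)\gets\mathit{Listen}$; (2) if $\mathit{State}(v)=\mathit{Listen}$ and some neighbor beeps: if $\delta(v)\equiv c-1\pmod T$ for some $c\in\mathit{CP}$, then $\delta(v)\gets\delta(v)+2\bmod T$, $\mathit{State}(v)\gets\mathit{Beep}$, $\mathit{Induced}(v)\gets\mathit{true}$; else $\delta(v)\gets\delta(v)+1\bmod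 T$; (3) if $\mathit{State}(v)=\mathit{Listen}$ and no neighbor beeps: $\delta(v)\gets\delta(v)+1\bmod T$; then if ($\mathit{Induced}(v)=\mathit{true}$ and new $\delta(v)\in\mathit{CP}$) or new $\delta(v)=0$: $\mathit{State}(v)\gets\mathit{Beep}$, $\mathit{Induced}(v)\gets\mathit{false}$. Virtual counter: if $v$ is activated in round $t_0$ then $c_{t_0}(v)=0$, and $c_{t+1}(v)=c_t(v)+a$, where $a\in\{1,2\}$ is the amount added to $\delta(v)$ (before reduction mod $T$) in round $t$. $d_t(v,w)=|c_t(v)-c_t(w)|$. *)

theory Defs
  imports Main
begin

datatype nstate = Inactive | Beep | Listen

text \<open>Local state of a node: State, delta, Induced, and the virtual counter c.\<close>
record node =
  state :: nstate
  dl :: nat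
  induced :: bool
  cnt :: nat

definition CP :: "nat \<Rightarrow> nat set" where
  "CP T = {c. c mod 4 = 0 \<and> c + 3 < T}"

definition inactive_node :: node where
  "inactive_node = \<lparr>state = Inactive, dl = 0, induced = False, cnt = 0\<rparr>"

definition activated_node :: node where
  "activated_node = \<lparr>state = Beep, dl = 1, induced = True, cnt = 0\<rparr>"

definition fs_step :: "nat \<Rightarrow> bool \<Rightarrow> node \<Rightarrow> node" where
  "fs_step T heard n =
     (case state n of
        Inactive \<Rightarrow> n
      | Beep \<Rightarrow> n\<lparr>dl := (dl n + 1) mod T, state := Listen, cnt := cnt n + 1\<rparr>
      | Listen \<Rightarrow>
          (if heard then
             (if (\<exists>c\<in>CP T. int (dl n) mod int T = (int c - 1) mod int T)
              then n\<lparr>dl := (dl n + 2) mod T, state := Beep, induced := True, cnt := cnt n + 2\<rparr>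
              else n\<lparr>dl := (dl n + 1) mod T, cnt := cnt n + 1\<rparr>)
           else
             (let d' = (dl n + 1) mod T in
              if (induced n \<and> d' \<in> CP T) \<or> d' = 0
              then n\<lparr>dl := d', state := Beep, induced := False, cnt := cnt n + 1\<rparr>
              else n\<lparr>dl := d', cnt := cnt n + 1\<rparr>)))"

definition beeps :: "('v \<Rightarrow> node) \<Rightarrow> 'v \<Rightarrow> bool" where
  "beeps q u \<longleftrightarrow> state (q u) = Beep"

text \<open>conf E T adv t v: configuration of v at the beginning of round t, after the
  activations of round t have taken effect. adv t v: the adversary activates v in round t
  (only effective if v is inactive).\<close>
fun conf :: "('v \<times> 'v) set \<Rightarrow> nat \<Rightarrow> (nat \<Rightarrow> 'v \<Rightarrow> bool) \<Rightarrow> nat \<Rightarrow> 'v \<Rightarrow> node" where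
  "conf E T adv 0 = (\<lambda>v. if adv 0 v then activated_node else inactive_node)"
| "conf E T adv (Suc t) =
     (let q = conf E T adv t;
          heard = (\<lambda>v. \<exists>u. (v, u) \<in> E \<and> beeps q u);
          p = (\<lambda>v. fs_step T (heard v) (q v))
      in (\<lambda>v. if state (p v) = Inactive \<and> (adv (Suc t) v \<or> heard v)
              then activated_node else p v))"

definition active :: "('v \<times> 'v) set \<Rightarrow> nat \<Rightarrow> (nat \<Rightarrow> 'v \<Rightarrow> bool) \<Rightarrow> nat \<Rightarrow> 'v \<Rightarrow> bool" where
  "active E T adv t v \<longleftrightarrow> state (conf E T adv t v) \<noteq> Inactive"

definition dist_c :: "('v \<times> 'v) set \<Rightarrow> nat \<Rightarrow> (nat \<Rightarrow> 'v \<Rightarrow> bool) \<Rightarrow> nat \<Rightarrow> 'v \<Rightarrow> 'v \<Rightarrow> nat" where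
  "dist_c E T adv t v w = nat \<bar>int (cnt (conf E T adv t v)) - int (cnt (conf E T adv t w))\<bar>"

end

theory Submission imports Defs begin

lemma fs_step_state_ne: "state n \<noteq> Inactive \<Longrightarrow> state (fs_step T h n) \<noteq> Inactive"
  by (auto simp: fs_step_def Let_def split: nstate.splits)

lemma conf_Suc_active:
  assumes "state (conf E T adv s v) \<noteq> Inactive"
  shows "conf E T adv (Suc s) v = fs_step T (\<exists>u. (v,u)\<in>E \<and> beeps (conf E T adv s) u) (conf E T adv s v)"
  using assms fs_step_state_ne[OF assms] by (simp add: Let_def)

lemma active_Suc: "active E T adv s v \<Longrightarrow> active E T adv (Suc s) v"
  unfolding active_def using conf_Suc_active fs_step_state_ne by metis

lemma active_mono: "active E T adv s v \<Longrightarrow> s \<le> s' \<Longrightarrow> active E T adv s' v"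
proof (induction s')
  case 0 then show ?case by simp
next
  case (Suc s') then show ?case using active_Suc by (cases "s \<le> s'") (auto simp: le_Suc_eq)
qed

lemma fs_step_dl:
  assumes "state n \<noteq> Inactive" "dl n = (cnt n + 1) mod T" "T > 0"
  shows "dl (fs_step T h n) = (cnt (fs_step T h n) + 1) mod T"
  using assms by (auto simp: fs_step_def Let_def mod_simps split: nstate.splits)

lemma inv_dl:
  assumes "T \<ge> 4" "active E T adv s v"
  shows "dl (conf E T adv s v) = (cnt (conf E T adv s v) + 1) mod T"
  using assms(2)
proof (induction s arbitrary: v)
  case 0
  then show ?case using assms(1) by (cases "adv 0 v") (auto simp: active_def activated_node_def inactive_node_def)
next
  case (Suc s)
  show ?case
  proof (cases "active E T adv s v")
    case True
    then show ?thesis using Suc.IH[OF True] conf_Suc_active[of E T adv s v] fs_step_dl assms(1)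
      by (simp add: active_def)
  next
    case False
    then have "conf E T adv (Suc s) v = activated_node"
      using Suc.prems by (auto simp: active_def Let_def fs_step_def inactive_node_def split: if_splits)
    then show ?thesis using assms(1) by (simp add: activated_node_def)
  qed
qed

lemma fs_step_cnt:
  assumes "state n \<noteq> Inactive"
  shows "cnt (fs_step T h n) = cnt n + 1 \<or> cnt (fs_step T h n) = cnt n + 2"
  using assms by (auto simp: fs_step_def Let_def split: nstate.splits)

lemma fs_step_two:
  assumes "state n \<noteq> Inactive" "cnt (fs_step T h n) = cnt n + 2"
  shows "state n = Listen \<and> h \<and> (\<exists>c\<in>CP T. int (dl n) mod int T = (int c - 1) mod int T)
     \<and> state (fs_step T h n) = Beep"
  using assms by (auto simp: fs_step_def Let_def split: nstate.splits if_splits)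

lemma fs_step_one_beep:
  assumes "state n \<noteq> Inactive" "cnt (fs_step T h n) = cnt n + 1" "state (fs_step T h n) = Beep"
  shows "state n = Listen \<and> ((dl n + 1) mod T \<in> CP T \<or> (dl n + 1) mod T = 0)"
  using assms by (auto simp: fs_step_def Let_def split: nstate.splits if_splits)

lemma fs_step_beep:
  assumes "state n = Beep"
  shows "cnt (fs_step T h n) = cnt n + 1"
  using assms by (auto simp: fs_step_def)

lemma fs_step_listen_cp:
  assumes "state n = Listen" "h" "\<exists>c\<in>CP T. int (dl n) mod int T = (int c - 1) mod int T"
  shows "cnt (fs_step T h n) = cnt n + 2"
  using assms by (auto simp: fs_step_def)

lemma arith_cp:
  assumes "T \<ge> 4" "c \<in> CP T" "int d mod int T = (int c - 1) mod int T" "d < T"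
  shows "d \<notin> CP T \<and> d \<noteq> 0"
proof -
  have c: "c mod 4 = 0" "c + 3 < T" using assms(2) by (auto simp: CP_def)
  have d: "int d = (int c - 1) mod int T" using assms(3,4) by simp
  show ?thesis
  proof (cases "c = 0")
    case True
    then have "int d = int T - 1" using d assms(1)
      by (simp add: zmod_minus1)
    then show ?thesis using assms(1) by (auto simp: CP_def)
  next
    case False
    then have "int d = int c - 1" using d c by simp
    then have "d = c - 1" "c \<ge> 4" using False c by auto
    moreover have "(c - 1) mod 4 = 3"
    proof -
      obtain k where k: "c = 4 * k" using c(1) by auto
      then obtain j where "k = Suc j" using False by (cases k) auto
      then have "c - 1 = 4 * j + 3" using k by simp
      then show ?thesis by simp
    qed
    ultimately show ?thesis by (auto simp: CP_def)
  qed
qed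

declare conf.simps(2)[simp del]

lemma key:
  assumes T4: "T \<ge> 4" and aa: "active E T adv s a" and ab: "active E T adv s b"
    and Eba: "(b, a) \<in> E"
    and c0: "cnt (conf E T adv s a) \<le> cnt (conf E T adv s b) + 1"
    and c1: "cnt (conf E T adv (Suc s) a) \<ge> cnt (conf E T adv (Suc s) b) + 2"
  shows "cnt (conf E T adv (Suc (Suc s)) a) = cnt (conf E T adv (Suc (Suc s)) b) + 1"
proof -
  define X where "X = conf E T adv s a"
  define Y where "Y = conf E T adv s b"
  define X1 where "X1 = conf E T adv (Suc s) a"
  define Y1 where "Y1 = conf E T adv (Suc s) b"
  define ha where "ha = (\<exists>u. (a,u)\<in>E \<and> beeps (conf E T adv s) u)"
  define hb where "hb = (\<exists>u. (b,u)\<in>E \<and> beeps (conf E T adv s) u)"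
  have sX: "state X \<noteq> Inactive" and sY: "state Y \<noteq> Inactive"
    using aa ab by (auto simp: active_def X_def Y_def)
  have X1: "X1 = fs_step T ha X" unfolding X1_def X_def ha_def
    by (rule conf_Suc_active) (use sX in \<open>simp add: X_def\<close>)
  have Y1: "Y1 = fs_step T hb Y" unfolding Y1_def Y_def hb_def
    by (rule conf_Suc_active) (use sY in \<open>simp add: Y_def\<close>)
  have X2: "cnt X1 = cnt X + 2" and Y2: "cnt Y1 = cnt Y + 1" and XY: "cnt X = cnt Y + 1"
    using fs_step_cnt[OF sX, of T ha] fs_step_cnt[OF sY, of T hb] c0 c1
    by (auto simp: X1 Y1 X_def Y_def X1_def[symmetric] Y1_def[symmetric])
  from fs_step_two[OF sX] X2 X1 obtain c where cc: "c \<in> CP T"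
     "int (dl X) mod int T = (int c - 1) mod int T" and bX1: "state X1 = Beep"
    by auto
  have dX: "dl X = (cnt X + 1) mod T" using inv_dl[OF T4 aa] X_def by simp
  have dY1: "dl Y1 = (cnt Y1 + 1) mod T"
    using inv_dl[OF T4 active_Suc[OF ab]] Y1_def by simp
  have dYX: "dl Y1 = dl X" using dX dY1 Y2 XY by simp
  have dY: "dl Y = (cnt Y + 1) mod T" using inv_dl[OF T4 ab] Y_def by simp
  have dY1': "dl Y1 = (dl Y + 1) mod T" using dY dY1 Y2 by (simp add: mod_simps)
  have ltT: "dl X < T" using dX T4 by simp
  have nn: "dl X \<notin> CP T \<and> dl X \<noteq> 0" using arith_cp[OF T4 cc ltT] .
  have nbY1: "state Y1 \<noteq> Beep"
  proof
    assume "state Y1 = Beep"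
    then have "(dl Y + 1) mod T \<in> CP T \<or> (dl Y + 1) mod T = 0"
      using fs_step_one_beep[OF sY, of T hb] Y1 Y2 by simp
    then show False using nn dY1' dYX by simp
  qed
  have sY1: "state Y1 \<noteq> Inactive" using active_Suc[OF ab] Y1_def by (simp add: active_def)
  have lY1: "state Y1 = Listen" using nbY1 sY1 by (cases "state Y1") auto
  have sX1: "state X1 \<noteq> Inactive" using bX1 by simp
  have heard: "\<exists>u. (b,u)\<in>E \<and> beeps (conf E T adv (Suc s)) u"
    using Eba bX1 by (auto simp: beeps_def X1_def)
  have "conf E T adv (Suc (Suc s)) a = fs_step T (\<exists>u. (a,u)\<in>E \<and> beeps (conf E T adv (Suc s)) u) X1"
    unfolding X1_def by (rule conf_Suc_active) (use sX1 in \<open>simp add: X1_def\<close>)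
  then have A2: "cnt (conf E T adv (Suc (Suc s)) a) = cnt X1 + 1" using fs_step_beep[OF bX1] by simp
  have "conf E T adv (Suc (Suc s)) b = fs_step T (\<exists>u. (b,u)\<in>E \<and> beeps (conf E T adv (Suc s)) u) Y1"
    unfolding Y1_def by (rule conf_Suc_active) (use sY1 in \<open>simp add: Y1_def\<close>)
  then have B2: "cnt (conf E T adv (Suc (Suc s)) b) = cnt Y1 + 2"
    using fs_step_listen_cp[OF lY1 heard, of ] cc dYX by auto
  show ?thesis using A2 B2 X2 Y2 XY by simp
qed

lemma natabs_le1: "(nat \<bar>int a - int b\<bar> \<le> 1) \<longleftrightarrow> (a \<le> b + 1 \<and> b \<le> a + 1)"
  by arith

theorem mainTheorem10:
  fixes E :: "('v::finite \<times> 'v) set" and T :: nat and adv :: "nat \<Rightarrow> 'v \<Rightarrow> bool"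
    and v w :: 'v and t t' :: nat
  assumes "sym E" and "irrefl E" and "\<forall>x y. (x, y) \<in> E\<^sup>*"
    and "T \<ge> 4"
    and "(v, w) \<in> E"
    and "active E T adv t v" and "active E T adv t w"
    and "dist_c E T adv t v w \<le> 1"
    and "t < t'" and "dist_c E T adv t' v w > 1"
    and "\<forall>s. t < s \<and> s < t' \<longrightarrow> dist_c E T adv s v w \<le> 1"
  shows "dist_c E T adv (Suc t') v w \<le> 1"
proof -
  obtain s where s: "t' = Suc s" "t \<le> s" using assms(9) by (cases t') auto
  have d0: "dist_c E T adv s v w \<le> 1"
  proof (cases "s = t")
    case True then show ?thesis using assms(8) by simp
  next
    case False then have "t < s \<and> s < t'" using s by simp
    then show ?thesis using assms(11) by blast
  qed
  have av: "active E T adv s v" using active_mono[OF assms(6) s(2)] .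
  have aw: "active E T adv s w" using active_mono[OF assms(7) s(2)] .
  have Ewv: "(w, v) \<in> E" using assms(1,5) by (auto simp: sym_def)
  have d1: "dist_c E T adv (Suc s) v w > 1" using assms(10) s(1) by (simp only:)
  show ?thesis
  proof (cases "cnt (conf E T adv (Suc s) v) \<ge> cnt (conf E T adv (Suc s) w) + 2")
    case True
    have "cnt (conf E T adv s v) \<le> cnt (conf E T adv s w) + 1" using d0 unfolding dist_c_def not_le[symmetric] natabs_le1 by linarith
    from key[OF assms(4) av aw Ewv this True] show ?thesis unfolding s(1) dist_c_def natabs_le1 by linarith
  next
    case False
    then have C: "cnt (conf E T adv (Suc s) w) \<ge> cnt (conf E T adv (Suc s) v) + 2"
      using d1 unfolding dist_c_def not_le[symmetric] natabs_le1 by linarith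
    have "cnt (conf E T adv s w) \<le> cnt (conf E T adv s v) + 1" using d0 unfolding dist_c_def not_le[symmetric] natabs_le1 by linarith
    from key[OF assms(4) aw av assms(5) this C] show ?thesis unfolding s(1) dist_c_def natabs_le1 by linarith
  qed
qed

end
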